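(* Let $\mathcal{G}=(\mathcal{N},\mathcal{E})$ be a connected undirected graph with $\mathcal{N}=\{1,\dots,N\}$, $\omega_1,\dots,\omega_N\in\mathbb{R}$, and $\{\Delta_{ij}\}$ a formation (real $\Delta_{ij}$ for each ordered pair with $\{i,j\}\in\mathcal{E}$, $\Delta_{ji}=-\Delta_{ij}$) with $\Delta_{ij}\not\equiv 0,\pi\pmod{2\pi}$ for all edges. Let $\bar\omega\in\mathbb{R}$, let $\mathcal{E}=\mathcal{E}^a\sqcup\mathcal{E}^r$ be a partition, $\mathcal{N}_i^a=\{j:\{i,j\}\in\mathcal{E}^a\}$, $\mathcal{N}_i^r=\{j:\{i,j\}\in\mathcal{E}^r\}$, and fix one attractive coupling function $f^*$ and one repulsive coupling function $g^*$. Put $f^*_{ij}:=f^*(\Delta_{ij})$ for $j\in\mathcal{N}_i^a$ and $g^*_{ij}:=g^*(\Delta_{ij})$ for $j\in\mathcal{N}_i^r$, and define $\mathcal{N}_i^{a,+}=\{j\in\mathcal{N}_i^a:\operatorname{sgn}(\bar\omega-\omega_i)=\operatorname{sgn}(f^*_{ij})\}$, $\mathcal{N}_i^{a,-}=\{j\in\mathcal{N}_i^a:\operatorname{sgn}(\bar\omega-\omega_i)=-\operatorname{sgn}(f^*_{ij})\}$, $\mathcal{N}_i^{r,+}=\{j\in\mathcal{N}_i^r:\operatorname{sgn}(\bar\omega-\omega_i)=\operatorname{sgn}(g^*_{ij})\}$, $\mathcal{N}_i^{r,-}=\{j\in\mathcal{N}_i^r:\operatorname{sgn}(\bar\omega-\omega_i)=-\operatorname{sgn}(g^*_{ij})\}$.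 Assume that for each $i\in\mathcal{N}$ the set $\mathcal{N}_i^+:=\mathcal{N}_i^{a,+}\cup\mathcal{N}_i^{r,+}$ is non-empty, and let $S_i:=\sum_{j\in\mathcal{N}_i^{a,+}}(f^*_{ij})^2+\sum_{j\in\mathcal{N}_i^{r,+}}(g^*_{ij})^2$. Consider the equations $$(\ast)\qquad \bar\omega-\omega_i=\sum_{j\in\mathcal{N}_i^a}\alpha_{ij}f^*_{ij}+\sum_{j\in\mathcal{N}_i^r}\beta_{ij}g^*_{ij},\qquad i\in\mathcal{N},$$ in unknowns $\alpha_{ij}$ ($i\in\mathcal{N}$, $j\in\mathcal{N}_i^a$) and $\beta_{ij}$ ($i\in\mathcal{N}$, $j\in\mathcal{N}_i^r$), with energy $E(\alpha,\beta)=\sum_{i\in\mathcal{N}}\big(\sum_{j\in\mathcal{N}_i^a}\alpha_{ij}^2+\sum_{j\in\mathcal{N}_i^r}\beta_{ij}^2\big)$. Then: (i) there exist $\alpha_{ij}>0$ and $\beta_{ij}>0$ satisfying $(\ast)$; (ii) for $\epsilon>0$ define $\alpha^\epsilon_{ij}=\epsilon$ for $j\in\mathcal{N}_i^{a,-}$, $\alpha^\epsilon_{ij}=|\bar\omega-\omega_i|\,|f^*_{ij}|/S_i$ for $j\in\mathcal{N}_i^{a,+}$, $\beta^\epsilon_{ij}=\epsilon$ for $j\in\mathcal{N}_i^{r,-}$, $\beta^\epsilon_{ij}=|\bar\omega-\omega_i|\,|g^*_{ij}|/S_i$ for $j\in\mathcal{N}_i^{r,+}$. Then every positive solution $(\alpha,\beta)$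 of $(\ast)$ satisfies $E(\alpha,\beta)\ge E_0:=\sum_{i\in\mathcal{N}}(\bar\omega-\omega_i)^2/S_i$, the infimum of $E$ over positive solutions of $(\ast)$ equals $E_0$, and as $\epsilon\to 0^+$ the family $(\alpha^\epsilon,\beta^\epsilon)$ satisfies $(\ast)$ up to an error tending to $0$ and $E(\alpha^\epsilon,\beta^\epsilon)\to E_0$; i.e. $(\alpha^\epsilon,\beta^\epsilon)$ is a minimum-energy solution up to arbitrary precision.
   Context: An attractive coupling function is a $2\pi$-periodic function $f:\mathbb{R}\to\mathbb{R}$, twice differentiable on $(-\pi,\pi)$, with $f(0)=0$, $f'>0$ on $(-\pi,\pi)$, $f(t)\to-\infty$ as $t\to(2n+1)\pi^+$ and $f(t)\to+\infty$ as $t\to(2n+1)\pi^-$ for every integer $n$. A repulsive coupling function is a $2\pi$-periodic $g:\mathbb{R}\to\mathbb{R}$, twice differentiable on $(0,2\pi)$, with $g(\pi)=0$, $g'>0$ on $(0,2\pi)$, $g(t)\to-\infty$ as $t\to 2n\pi^+$ and $g(t)\to+\infty$ as $t\to 2n\pi^-$ for every integer $n$. The coupling functions on the network are the scaled prototypes $f_{ij}=\alpha_{ij}f^*$ (attractive edges) and $g_{ij}=\beta_{ij}g^*$ (repulsive edges), so $(\ast)$ is the condition that the formation moving rigidly with frequency $\bar\omega$ solves $\dot\theta_i=\omega_i+\sum_{j\in\mathcal{N}_i^a}f_{ij}(\theta_j-\theta_i)+\sum_{j\in\mathcal{N}_i^r}g_{ij}(\theta_j-\theta_i)$. Here $\operatorname{sgn}$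 is the sign function with $\operatorname{sgn}(0)=0$. *)

theory Defs
  imports "HOL-Analysis.Analysis"
begin

definition attractive_coupling :: "(real \<Rightarrow> real) \<Rightarrow> bool" where
  "attractive_coupling f \<longleftrightarrow>
     (\<forall>t. f (t + 2 * pi) = f t) \<and>
     (\<forall>t\<in>{-pi<..<pi}. f differentiable (at t) \<and> (deriv f) differentiable (at t)) \<and>
     f 0 = 0 \<and>
     (\<forall>t\<in>{-pi<..<pi}. deriv f t > 0) \<and>
     (\<forall>n::int. filterlim f at_bot (at_right ((2 * of_int n + 1) * pi)) \<and>
               filterlim f at_top (at_left ((2 * of_int n + 1) * pi)))"

definition repulsive_coupling :: "(real \<Rightarrow> real) \<Rightarrow> bool" where
  "repulsive_coupling g \<longleftrightarrow>
     (\<forall>t. g (t + 2 * pi) = g t) \<and>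
     (\<forall>t\<in>{0<..<2 * pi}. g differentiable (at t) \<and> (deriv g) differentiable (at t)) \<and>
     g pi = 0 \<and>
     (\<forall>t\<in>{0<..<2 * pi}. deriv g t > 0) \<and>
     (\<forall>n::int. filterlim g at_bot (at_right (2 * of_int n * pi)) \<and>
               filterlim g at_top (at_left (2 * of_int n * pi)))"

definition undirected_graph :: "nat \<Rightarrow> (nat \<Rightarrow> nat \<Rightarrow> bool) \<Rightarrow> bool" where
  "undirected_graph N E \<longleftrightarrow>
     (\<forall>i j. E i j \<longrightarrow> i \<in> {1..N} \<and> j \<in> {1..N}) \<and>
     (\<forall>i j. E i j \<longrightarrow> E j i) \<and> (\<forall>i. \<not> E i i)"

definition graph_connected :: "nat \<Rightarrow> (nat \<Rightarrow> nat \<Rightarrow> bool) \<Rightarrow> bool" where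
  "graph_connected N E \<longleftrightarrow>
     (\<forall>i\<in>{1..N}. \<forall>j\<in>{1..N}. (i, j) \<in> {(a, b). E a b}\<^sup>*)"

definition nbr :: "nat \<Rightarrow> (nat \<Rightarrow> nat \<Rightarrow> bool) \<Rightarrow> nat \<Rightarrow> nat set" where
  "nbr N R i = {j \<in> {1..N}. R i j}"

definition formation :: "(nat \<Rightarrow> nat \<Rightarrow> bool) \<Rightarrow> (nat \<Rightarrow> nat \<Rightarrow> real) \<Rightarrow> bool" where
  "formation E \<Delta> \<longleftrightarrow> (\<forall>i j. E i j \<longrightarrow> \<Delta> j i = - \<Delta> i j)"

definition plus_nbr ::
  "nat \<Rightarrow> (nat \<Rightarrow> nat \<Rightarrow> bool) \<Rightarrow> (real \<Rightarrow> real) \<Rightarrow> (nat \<Rightarrow> nat \<Rightarrow> real) \<Rightarrow> (nat \<Rightarrow> real) \<Rightarrow> real \<Rightarrow> nat \<Rightarrow> nat set" where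
  "plus_nbr N R h \<Delta> \<omega> \<omega>b i = {j \<in> nbr N R i. sgn (\<omega>b - \<omega> i) = sgn (h (\<Delta> i j))}"

definition minus_nbr ::
  "nat \<Rightarrow> (nat \<Rightarrow> nat \<Rightarrow> bool) \<Rightarrow> (real \<Rightarrow> real) \<Rightarrow> (nat \<Rightarrow> nat \<Rightarrow> real) \<Rightarrow> (nat \<Rightarrow> real) \<Rightarrow> real \<Rightarrow> nat \<Rightarrow> nat set" where
  "minus_nbr N R h \<Delta> \<omega> \<omega>b i = {j \<in> nbr N R i. sgn (\<omega>b - \<omega> i) = - sgn (h (\<Delta> i j))}"

definition coupling_sum ::
  "nat \<Rightarrow> (nat \<Rightarrow> nat \<Rightarrow> bool) \<Rightarrow> (nat \<Rightarrow> nat \<Rightarrow> bool) \<Rightarrow> (real \<Rightarrow> real) \<Rightarrow> (real \<Rightarrow> real)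
     \<Rightarrow> (nat \<Rightarrow> nat \<Rightarrow> real) \<Rightarrow> (nat \<Rightarrow> nat \<Rightarrow> real) \<Rightarrow> (nat \<Rightarrow> nat \<Rightarrow> real) \<Rightarrow> nat \<Rightarrow> real" where
  "coupling_sum N Ea Er fs gs \<Delta> \<alpha> \<beta> i =
     (\<Sum>j\<in>nbr N Ea i. \<alpha> i j * fs (\<Delta> i j)) + (\<Sum>j\<in>nbr N Er i. \<beta> i j * gs (\<Delta> i j))"

definition positive_solution ::
  "nat \<Rightarrow> (nat \<Rightarrow> nat \<Rightarrow> bool) \<Rightarrow> (nat \<Rightarrow> nat \<Rightarrow> bool) \<Rightarrow> (real \<Rightarrow> real) \<Rightarrow> (real \<Rightarrow> real)
     \<Rightarrow> (nat \<Rightarrow> nat \<Rightarrow> real) \<Rightarrow> (nat \<Rightarrow> real) \<Rightarrow> real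
     \<Rightarrow> (nat \<Rightarrow> nat \<Rightarrow> real) \<Rightarrow> (nat \<Rightarrow> nat \<Rightarrow> real) \<Rightarrow> bool" where
  "positive_solution N Ea Er fs gs \<Delta> \<omega> \<omega>b \<alpha> \<beta> \<longleftrightarrow>
     (\<forall>i\<in>{1..N}. \<forall>j\<in>nbr N Ea i. \<alpha> i j > 0) \<and>
     (\<forall>i\<in>{1..N}. \<forall>j\<in>nbr N Er i. \<beta> i j > 0) \<and>
     (\<forall>i\<in>{1..N}. \<omega>b - \<omega> i = coupling_sum N Ea Er fs gs \<Delta> \<alpha> \<beta> i)"

definition energy ::
  "nat \<Rightarrow> (nat \<Rightarrow> nat \<Rightarrow> bool) \<Rightarrow> (nat \<Rightarrow> nat \<Rightarrow> bool)
     \<Rightarrow> (nat \<Rightarrow> nat \<Rightarrow> real) \<Rightarrow> (nat \<Rightarrow> nat \<Rightarrow> real) \<Rightarrow> real" where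
  "energy N Ea Er \<alpha> \<beta> =
     (\<Sum>i\<in>{1..N}. (\<Sum>j\<in>nbr N Ea i. (\<alpha> i j)\<^sup>2) + (\<Sum>j\<in>nbr N Er i. (\<beta> i j)\<^sup>2))"


definition S_sum ::
  "nat \<Rightarrow> (nat \<Rightarrow> nat \<Rightarrow> bool) \<Rightarrow> (nat \<Rightarrow> nat \<Rightarrow> bool) \<Rightarrow> (real \<Rightarrow> real) \<Rightarrow> (real \<Rightarrow> real)
     \<Rightarrow> (nat \<Rightarrow> nat \<Rightarrow> real) \<Rightarrow> (nat \<Rightarrow> real) \<Rightarrow> real \<Rightarrow> nat \<Rightarrow> real" where
  "S_sum N Ea Er fs gs \<Delta> \<omega> \<omega>b i =
     (\<Sum>j\<in>plus_nbr N Ea fs \<Delta> \<omega> \<omega>b i. (fs (\<Delta> i j))\<^sup>2)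
   + (\<Sum>j\<in>plus_nbr N Er gs \<Delta> \<omega> \<omega>b i. (gs (\<Delta> i j))\<^sup>2)"

definition E0 ::
  "nat \<Rightarrow> (nat \<Rightarrow> nat \<Rightarrow> bool) \<Rightarrow> (nat \<Rightarrow> nat \<Rightarrow> bool) \<Rightarrow> (real \<Rightarrow> real) \<Rightarrow> (real \<Rightarrow> real)
     \<Rightarrow> (nat \<Rightarrow> nat \<Rightarrow> real) \<Rightarrow> (nat \<Rightarrow> real) \<Rightarrow> real \<Rightarrow> real" where
  "E0 N Ea Er fs gs \<Delta> \<omega> \<omega>b =
     (\<Sum>i\<in>{1..N}. (\<omega>b - \<omega> i)\<^sup>2 / S_sum N Ea Er fs gs \<Delta> \<omega> \<omega>b i)"

text \<open>For the attractive part call with (R,h) = (Ea,fs), for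
  the repulsive part with (R,h) = (Er,gs). Value epsilon on the minus-set,
  the explicit formula otherwise (only entries j in N_i^R matter).\<close>
definition eps_coeff ::
  "nat \<Rightarrow> (nat \<Rightarrow> nat \<Rightarrow> bool) \<Rightarrow> (nat \<Rightarrow> nat \<Rightarrow> bool) \<Rightarrow> (real \<Rightarrow> real) \<Rightarrow> (real \<Rightarrow> real)
     \<Rightarrow> (nat \<Rightarrow> nat \<Rightarrow> real) \<Rightarrow> (nat \<Rightarrow> real) \<Rightarrow> real
     \<Rightarrow> (nat \<Rightarrow> nat \<Rightarrow> bool) \<Rightarrow> (real \<Rightarrow> real) \<Rightarrow> real \<Rightarrow> nat \<Rightarrow> nat \<Rightarrow> real" where
  "eps_coeff N Ea Er fs gs \<Delta> \<omega> \<omega>b R h \<epsilon> i j =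
     (if j \<in> minus_nbr N R h \<Delta> \<omega> \<omega>b i then \<epsilon>
      else \<bar>\<omega>b - \<omega> i\<bar> * \<bar>h (\<Delta> i j)\<bar> / S_sum N Ea Er fs gs \<Delta> \<omega> \<omega>b i)"

end

theory Submission imports Defs begin

lemma periodic_nat:
  assumes "\<forall>t. f (t + 2 * pi) = f t"
  shows "f (t + 2 * pi * real n) = (f t :: real)"
proof (induction n)
  case 0 then show ?case by simp
next
  case (Suc n)
  have "t + 2 * pi * real (Suc n) = (t + 2 * pi * real n) + 2 * pi" by (simp add: algebra_simps)
  then show ?case using assms Suc by metis
qed

lemma periodic_int:
  assumes "\<forall>t. f (t + 2 * pi) = f t"
  shows "f (t + 2 * pi * of_int k) = (f t :: real)"
proof (cases "k \<ge> 0")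
  case True
  then obtain n where "k = int n" by (metis nonneg_eq_int)
  then show ?thesis using periodic_nat[OF assms] by simp
next
  case False
  then obtain n where n: "k = - int n" using nonneg_eq_int[of "-k"] by (metis add.inverse_inverse neg_0_le_iff_le nle_le)
  have "f t = f ((t + 2 * pi * of_int k) + 2 * pi * real n)"
    using n by simp
  also have "\<dots> = f (t + 2 * pi * of_int k)" using periodic_nat[OF assms] by simp
  finally show ?thesis by simp
qed

lemma incr:
  fixes f :: "real \<Rightarrow> real"
  assumes "\<forall>t\<in>{a<..<b}. f differentiable (at t) \<and> (deriv f) differentiable (at t)"
    and "\<forall>t\<in>{a<..<b}. deriv f t > 0"
    and "a < x" "x < y" "y < b"
  shows "f x < f y"
proof (rule DERIV_pos_imp_increasing[OF \<open>x < y\<close>])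
  fix z assume "x \<le> z" "z \<le> y"
  then have z: "z \<in> {a<..<b}" using assms by auto
  then have "DERIV f z :> deriv f z" using assms(1) by (simp add: DERIV_deriv_iff_real_differentiable)
  then show "\<exists>y. DERIV f z :> y \<and> y > 0" using assms(2) z by blast
qed

lemma att_nonzero:
  assumes "attractive_coupling f" "\<And>k::int. t \<noteq> of_int k * pi"
  shows "f t \<noteq> 0"
proof -
  define k where "k = \<lfloor>(t + pi) / (2 * pi)\<rfloor>"
  define s where "s = t - 2 * pi * of_int k"
  have k1: "of_int k \<le> (t + pi) / (2 * pi)" "(t + pi) / (2 * pi) < of_int k + 1"
    unfolding k_def by linarith+
  have "-pi \<le> s" "s < pi" using k1 pi_gt_zero unfolding s_def by (auto simp: field_simps)
  moreover have "s \<noteq> -pi"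
  proof
    assume "s = -pi"
    then have "t = of_int (2*k - 1) * pi" unfolding s_def by (simp add: algebra_simps)
    then show False using assms(2) by blast
  qed
  moreover have "s \<noteq> 0"
  proof
    assume "s = 0"
    then have "t = of_int (2*k) * pi" unfolding s_def by (simp add: algebra_simps)
    then show False using assms(2) by blast
  qed
  ultimately have s: "-pi < s" "s < pi" "s \<noteq> 0" by auto
  have per: "\<forall>t. f (t + 2 * pi) = f t" and f0: "f 0 = 0"
    using assms(1) unfolding attractive_coupling_def by auto
  have ft: "f t = f s" using periodic_int[OF per, of s k] unfolding s_def by simp
  have d: "\<forall>t\<in>{-pi<..<pi}. f differentiable (at t) \<and> (deriv f) differentiable (at t)"
     "\<forall>t\<in>{-pi<..<pi}. deriv f t > 0" using assms(1) unfolding attractive_coupling_def by auto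
  show ?thesis
  proof (cases "s < 0")
    case True
    then have "f s < f 0" using incr[OF d, of s 0] s by auto
    then show ?thesis using ft f0 by simp
  next
    case False
    then have "f 0 < f s" using incr[OF d, of 0 s] s by auto
    then show ?thesis using ft f0 by simp
  qed
qed

lemma rep_nonzero:
  assumes "repulsive_coupling f" "\<And>k::int. t \<noteq> of_int k * pi"
  shows "f t \<noteq> 0"
proof -
  define k where "k = \<lfloor>t / (2 * pi)\<rfloor>"
  define s where "s = t - 2 * pi * of_int k"
  have k1: "of_int k \<le> t / (2 * pi)" "t / (2 * pi) < of_int k + 1"
    unfolding k_def by linarith+
  have "0 \<le> s" "s < 2*pi" using k1 pi_gt_zero unfolding s_def by (auto simp: field_simps)
  moreover have "s \<noteq> pi"
  proof
    assume "s = pi"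
    then have "t = of_int (2*k + 1) * pi" unfolding s_def by (simp add: algebra_simps)
    then show False using assms(2) by blast
  qed
  moreover have "s \<noteq> 0"
  proof
    assume "s = 0"
    then have "t = of_int (2*k) * pi" unfolding s_def by (simp add: algebra_simps)
    then show False using assms(2) by blast
  qed
  ultimately have s: "0 < s" "s < 2*pi" "s \<noteq> pi" by auto
  have per: "\<forall>t. f (t + 2 * pi) = f t" and f0: "f pi = 0"
    using assms(1) unfolding repulsive_coupling_def by auto
  have ft: "f t = f s" using periodic_int[OF per, of s k] unfolding s_def by simp
  have d: "\<forall>t\<in>{0<..<2*pi}. f differentiable (at t) \<and> (deriv f) differentiable (at t)"
     "\<forall>t\<in>{0<..<2*pi}. deriv f t > 0" using assms(1) unfolding repulsive_coupling_def by auto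
  show ?thesis
  proof (cases "s < pi")
    case True
    then have "f s < f pi" using incr[OF d, of s pi] s by auto
    then show ?thesis using ft f0 by simp
  next
    case False
    then have "f pi < f s" using incr[OF d, of pi s] s by auto
    then show ?thesis using ft f0 by simp
  qed
qed


definition coefK :: "real \<Rightarrow> real \<Rightarrow> real \<Rightarrow> nat set \<Rightarrow> (nat \<Rightarrow> real) \<Rightarrow> real \<Rightarrow> nat \<Rightarrow> real" where
  "coefK d S K M h \<epsilon> j = (if j \<in> M then \<epsilon> else (\<bar>d\<bar> + \<epsilon> * K) * \<bar>h j\<bar> / S)"

lemma sgn_cases:
  fixes d x :: real
  assumes "d \<noteq> 0" "x \<noteq> 0"
  shows "sgn d = sgn x \<or> sgn d = - sgn x"
  using assms by (cases "d > 0"; cases "x > 0") (auto simp: sgn_if split: if_splits)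

lemma plus_abs:
  fixes d x :: real
  assumes "d \<noteq> 0" "sgn d = sgn x"
  shows "x = sgn d * \<bar>x\<bar>"
  using assms by (cases "d > 0"; cases "x > 0") (auto simp: sgn_if split: if_splits)

lemma minus_abs:
  fixes d x :: real
  assumes "d \<noteq> 0" "sgn d = - sgn x"
  shows "x = - sgn d * \<bar>x\<bar>"
  using assms by (cases "d > 0"; cases "x > 0") (auto simp: sgn_if split: if_splits)

lemma sgn_sq: "(d::real) \<noteq> 0 \<Longrightarrow> sgn d * sgn d = 1"
  by (simp add: sgn_if)

lemma split_sum:
  fixes d :: real and h F :: "nat \<Rightarrow> real"
  assumes "finite X" "\<forall>j\<in>X. h j \<noteq> 0" "d \<noteq> 0"
  shows "(\<Sum>j\<in>X. F j) = (\<Sum>j\<in>{j\<in>X. sgn d = sgn (h j)}. F j) + (\<Sum>j\<in>{j\<in>X. sgn d = - sgn (h j)}. F j)"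
proof -
  have X: "X = {j\<in>X. sgn d = sgn (h j)} \<union> {j\<in>X. sgn d = - sgn (h j)}"
    using sgn_cases[OF assms(3)] assms(2) by blast
  have D: "{j\<in>X. sgn d = sgn (h j)} \<inter> {j\<in>X. sgn d = - sgn (h j)} = {}"
    using assms(3) by (auto simp: sgn_if split: if_splits)
  show ?thesis
    by (subst X, rule sum.union_disjoint) (use assms(1) D in auto)
qed

lemma split_sum_signed:
  fixes d :: real and h c :: "nat \<Rightarrow> real"
  assumes "finite X" "\<forall>j\<in>X. h j \<noteq> 0" "d \<noteq> 0"
  shows "sgn d * (\<Sum>j\<in>X. c j * h j) = (\<Sum>j\<in>{j\<in>X. sgn d = sgn (h j)}. c j * \<bar>h j\<bar>) - (\<Sum>j\<in>{j\<in>X. sgn d = - sgn (h j)}. c j * \<bar>h j\<bar>)"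
proof -
  have "sgn d * (\<Sum>j\<in>X. c j * h j) = (\<Sum>j\<in>X. sgn d * (c j * h j))" by (simp add: sum_distrib_left)
  also have "\<dots> = (\<Sum>j\<in>{j\<in>X. sgn d = sgn (h j)}. sgn d * (c j * h j)) + (\<Sum>j\<in>{j\<in>X. sgn d = - sgn (h j)}. sgn d * (c j * h j))"
    by (rule split_sum[OF assms])
  also have "(\<Sum>j\<in>{j\<in>X. sgn d = sgn (h j)}. sgn d * (c j * h j)) = (\<Sum>j\<in>{j\<in>X. sgn d = sgn (h j)}. c j * \<bar>h j\<bar>)"
  proof (rule sum.cong[OF refl])
    fix j assume "j \<in> {j\<in>X. sgn d = sgn (h j)}"
    then have "h j = sgn d * \<bar>h j\<bar>" using plus_abs assms(3) by blast
    then have "sgn d * (c j * h j) = (sgn d * sgn d) * (c j * \<bar>h j\<bar>)" by (metis mult.left_commute mult.assoc)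
    then show "sgn d * (c j * h j) = c j * \<bar>h j\<bar>" using sgn_sq[OF assms(3)] by simp
  qed
  also have "(\<Sum>j\<in>{j\<in>X. sgn d = - sgn (h j)}. sgn d * (c j * h j)) = - (\<Sum>j\<in>{j\<in>X. sgn d = - sgn (h j)}. c j * \<bar>h j\<bar>)"
    unfolding sum_negf[symmetric]
  proof (rule sum.cong[OF refl])
    fix j assume "j \<in> {j\<in>X. sgn d = - sgn (h j)}"
    then have "h j = - sgn d * \<bar>h j\<bar>" using minus_abs assms(3) by blast
    then have "sgn d * (c j * h j) = - (sgn d * sgn d) * (c j * \<bar>h j\<bar>)" by (metis mult.left_commute mult.assoc mult_minus_left)
    then show "sgn d * (c j * h j) = - (c j * \<bar>h j\<bar>)" using sgn_sq[OF assms(3)] by simp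
  qed
  finally show ?thesis by simp
qed

lemma sq_expand:
  fixes P :: "nat set" and c h :: "nat \<Rightarrow> real"
  shows "(\<Sum>j\<in>P. (c j - t * \<bar>h j\<bar>)\<^sup>2) = (\<Sum>j\<in>P. (c j)\<^sup>2) - 2 * t * (\<Sum>j\<in>P. c j * \<bar>h j\<bar>) + t\<^sup>2 * (\<Sum>j\<in>P. (h j)\<^sup>2)"
proof -
  have "(\<Sum>j\<in>P. (c j - t * \<bar>h j\<bar>)\<^sup>2) = (\<Sum>j\<in>P. (c j)\<^sup>2 - 2 * t * (c j * \<bar>h j\<bar>) + t\<^sup>2 * (h j)\<^sup>2)"
    by (rule sum.cong) (auto simp: power2_eq_square algebra_simps)
  then show ?thesis by (simp add: sum.distrib sum_subtractf sum_distrib_left)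
qed


lemma node_lb:
  fixes d S :: real and fa gr c e :: "nat \<Rightarrow> real" and Xa Xr :: "nat set"
  defines "Pa \<equiv> {j\<in>Xa. sgn d = sgn (fa j)}" and "Pr \<equiv> {j\<in>Xr. sgn d = sgn (gr j)}"
  assumes fin: "finite Xa" "finite Xr" and nz: "\<forall>j\<in>Xa. fa j \<noteq> 0" "\<forall>j\<in>Xr. gr j \<noteq> 0"
    and d0: "d \<noteq> 0" and cpos: "\<forall>j\<in>Xa. c j \<ge> 0" and epos: "\<forall>j\<in>Xr. e j \<ge> 0"
    and eq: "d = (\<Sum>j\<in>Xa. c j * fa j) + (\<Sum>j\<in>Xr. e j * gr j)"
    and Sdef: "S = (\<Sum>j\<in>Pa. (fa j)\<^sup>2) + (\<Sum>j\<in>Pr. (gr j)\<^sup>2)" and Spos: "S > 0"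
  shows "d\<^sup>2 / S \<le> (\<Sum>j\<in>Xa. (c j)\<^sup>2) + (\<Sum>j\<in>Xr. (e j)\<^sup>2)"
proof -
  define Ma where "Ma = {j\<in>Xa. sgn d = - sgn (fa j)}"
  define Mr where "Mr = {j\<in>Xr. sgn d = - sgn (gr j)}"
  have "\<bar>d\<bar> = sgn d * d" by (simp add: abs_sgn)
  also have "\<dots> = sgn d * (\<Sum>j\<in>Xa. c j * fa j) + sgn d * (\<Sum>j\<in>Xr. e j * gr j)"
    using eq by (simp add: algebra_simps)
  also have "\<dots> = ((\<Sum>j\<in>Pa. c j * \<bar>fa j\<bar>) - (\<Sum>j\<in>Ma. c j * \<bar>fa j\<bar>))
       + ((\<Sum>j\<in>Pr. e j * \<bar>gr j\<bar>) - (\<Sum>j\<in>Mr. e j * \<bar>gr j\<bar>))"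
    unfolding Pa_def Pr_def Ma_def Mr_def
    using split_sum_signed[OF fin(1) nz(1) d0, of c] split_sum_signed[OF fin(2) nz(2) d0, of e] by simp
  also have "\<dots> \<le> (\<Sum>j\<in>Pa. c j * \<bar>fa j\<bar>) + (\<Sum>j\<in>Pr. e j * \<bar>gr j\<bar>)"
  proof -
    have "(\<Sum>j\<in>Ma. c j * \<bar>fa j\<bar>) \<ge> 0" using cpos unfolding Ma_def by (intro sum_nonneg) auto
    moreover have "(\<Sum>j\<in>Mr. e j * \<bar>gr j\<bar>) \<ge> 0" using epos unfolding Mr_def by (intro sum_nonneg) auto
    ultimately show ?thesis by linarith
  qed
  finally have dP: "\<bar>d\<bar> \<le> (\<Sum>j\<in>Pa. c j * \<bar>fa j\<bar>) + (\<Sum>j\<in>Pr. e j * \<bar>gr j\<bar>)" .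
  define t where "t = \<bar>d\<bar> / S"
  have t0: "t \<ge> 0" using Spos by (simp add: t_def)
  have "0 \<le> (\<Sum>j\<in>Pa. (c j - t * \<bar>fa j\<bar>)\<^sup>2) + (\<Sum>j\<in>Pr. (e j - t * \<bar>gr j\<bar>)\<^sup>2)"
    by (intro add_nonneg_nonneg sum_nonneg) auto
  also have "\<dots> = ((\<Sum>j\<in>Pa. (c j)\<^sup>2) + (\<Sum>j\<in>Pr. (e j)\<^sup>2))
     - 2 * t * ((\<Sum>j\<in>Pa. c j * \<bar>fa j\<bar>) + (\<Sum>j\<in>Pr. e j * \<bar>gr j\<bar>)) + t\<^sup>2 * S"
    unfolding sq_expand Sdef by (simp add: algebra_simps)
  finally have A: "2 * t * ((\<Sum>j\<in>Pa. c j * \<bar>fa j\<bar>) + (\<Sum>j\<in>Pr. e j * \<bar>gr j\<bar>)) - t\<^sup>2 * S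
     \<le> (\<Sum>j\<in>Pa. (c j)\<^sup>2) + (\<Sum>j\<in>Pr. (e j)\<^sup>2)" by linarith
  have B: "2 * t * \<bar>d\<bar> \<le> 2 * t * ((\<Sum>j\<in>Pa. c j * \<bar>fa j\<bar>) + (\<Sum>j\<in>Pr. e j * \<bar>gr j\<bar>))"
    using dP t0 by (intro mult_left_mono) auto
  have C: "2 * t * \<bar>d\<bar> - t\<^sup>2 * S = d\<^sup>2 / S"
    using Spos unfolding t_def by (simp add: field_simps power2_eq_square)
  have D: "(\<Sum>j\<in>Pa. (c j)\<^sup>2) \<le> (\<Sum>j\<in>Xa. (c j)\<^sup>2)"
    using fin unfolding Pa_def by (intro sum_mono2) auto
  have E: "(\<Sum>j\<in>Pr. (e j)\<^sup>2) \<le> (\<Sum>j\<in>Xr. (e j)\<^sup>2)"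
    using fin unfolding Pr_def by (intro sum_mono2) auto
  show ?thesis using A B C D E by linarith
qed

lemma node_sol:
  fixes d S K \<epsilon> :: real and fa gr :: "nat \<Rightarrow> real" and Xa Xr :: "nat set"
  defines "Pa \<equiv> {j\<in>Xa. sgn d = sgn (fa j)}" and "Pr \<equiv> {j\<in>Xr. sgn d = sgn (gr j)}"
  defines "Ma \<equiv> {j\<in>Xa. sgn d = - sgn (fa j)}" and "Mr \<equiv> {j\<in>Xr. sgn d = - sgn (gr j)}"
  assumes fin: "finite Xa" "finite Xr" and nz: "\<forall>j\<in>Xa. fa j \<noteq> 0" "\<forall>j\<in>Xr. gr j \<noteq> 0"
    and d0: "d \<noteq> 0"
    and Sdef: "S = (\<Sum>j\<in>Pa. (fa j)\<^sup>2) + (\<Sum>j\<in>Pr. (gr j)\<^sup>2)" and Spos: "S > 0"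
  shows "(\<Sum>j\<in>Xa. coefK d S K Ma fa \<epsilon> j * fa j) + (\<Sum>j\<in>Xr. coefK d S K Mr gr \<epsilon> j * gr j)
       = d + \<epsilon> * sgn d * (K - ((\<Sum>j\<in>Ma. \<bar>fa j\<bar>) + (\<Sum>j\<in>Mr. \<bar>gr j\<bar>)))"
proof -
  have dPM: "Pa \<inter> Ma = {}" "Pr \<inter> Mr = {}" using d0 unfolding Pa_def Ma_def Pr_def Mr_def
    by (auto simp: sgn_if split: if_splits)
  have sa: "sgn d * (\<Sum>j\<in>Xa. coefK d S K Ma fa \<epsilon> j * fa j)
     = (\<Sum>j\<in>Pa. coefK d S K Ma fa \<epsilon> j * \<bar>fa j\<bar>) - (\<Sum>j\<in>Ma. coefK d S K Ma fa \<epsilon> j * \<bar>fa j\<bar>)"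
    unfolding Pa_def Ma_def by (rule split_sum_signed[OF fin(1) nz(1) d0])
  have sr: "sgn d * (\<Sum>j\<in>Xr. coefK d S K Mr gr \<epsilon> j * gr j)
     = (\<Sum>j\<in>Pr. coefK d S K Mr gr \<epsilon> j * \<bar>gr j\<bar>) - (\<Sum>j\<in>Mr. coefK d S K Mr gr \<epsilon> j * \<bar>gr j\<bar>)"
    unfolding Pr_def Mr_def by (rule split_sum_signed[OF fin(2) nz(2) d0])
  have pa: "(\<Sum>j\<in>Pa. coefK d S K Ma fa \<epsilon> j * \<bar>fa j\<bar>) = (\<bar>d\<bar> + \<epsilon> * K) / S * (\<Sum>j\<in>Pa. (fa j)\<^sup>2)"
    unfolding sum_distrib_left
    by (rule sum.cong[OF refl]) (use dPM in \<open>auto simp: coefK_def power2_eq_square\<close>)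
  have pr: "(\<Sum>j\<in>Pr. coefK d S K Mr gr \<epsilon> j * \<bar>gr j\<bar>) = (\<bar>d\<bar> + \<epsilon> * K) / S * (\<Sum>j\<in>Pr. (gr j)\<^sup>2)"
    unfolding sum_distrib_left
    by (rule sum.cong[OF refl]) (use dPM in \<open>auto simp: coefK_def power2_eq_square\<close>)
  have ma: "(\<Sum>j\<in>Ma. coefK d S K Ma fa \<epsilon> j * \<bar>fa j\<bar>) = \<epsilon> * (\<Sum>j\<in>Ma. \<bar>fa j\<bar>)"
    unfolding sum_distrib_left by (rule sum.cong[OF refl]) (auto simp: coefK_def)
  have mr: "(\<Sum>j\<in>Mr. coefK d S K Mr gr \<epsilon> j * \<bar>gr j\<bar>) = \<epsilon> * (\<Sum>j\<in>Mr. \<bar>gr j\<bar>)"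
    unfolding sum_distrib_left by (rule sum.cong[OF refl]) (auto simp: coefK_def)
  have tot: "sgn d * ((\<Sum>j\<in>Xa. coefK d S K Ma fa \<epsilon> j * fa j) + (\<Sum>j\<in>Xr. coefK d S K Mr gr \<epsilon> j * gr j))
     = \<bar>d\<bar> + \<epsilon> * (K - ((\<Sum>j\<in>Ma. \<bar>fa j\<bar>) + (\<Sum>j\<in>Mr. \<bar>gr j\<bar>)))"
  proof -
    have "sgn d * ((\<Sum>j\<in>Xa. coefK d S K Ma fa \<epsilon> j * fa j) + (\<Sum>j\<in>Xr. coefK d S K Mr gr \<epsilon> j * gr j))
       = ((\<bar>d\<bar> + \<epsilon> * K) / S * (\<Sum>j\<in>Pa. (fa j)\<^sup>2) + (\<bar>d\<bar> + \<epsilon> * K) / S * (\<Sum>j\<in>Pr. (gr j)\<^sup>2)) - \<epsilon> * ((\<Sum>j\<in>Ma. \<bar>fa j\<bar>) + (\<Sum>j\<in>Mr. \<bar>gr j\<bar>))"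
      unfolding distrib_left sa sr pa pr ma mr by (simp add: algebra_simps)
    also have "\<dots> = (\<bar>d\<bar> + \<epsilon> * K) / S * S - \<epsilon> * ((\<Sum>j\<in>Ma. \<bar>fa j\<bar>) + (\<Sum>j\<in>Mr. \<bar>gr j\<bar>))"
      by (metis Sdef distrib_left)
    finally     also have "(\<bar>d\<bar> + \<epsilon> * K) / S * S = \<bar>d\<bar> + \<epsilon> * K" using Spos by simp
    finally show ?thesis by (simp add: algebra_simps)
  qed
  have "(\<Sum>j\<in>Xa. coefK d S K Ma fa \<epsilon> j * fa j) + (\<Sum>j\<in>Xr. coefK d S K Mr gr \<epsilon> j * gr j)
      = sgn d * (sgn d * ((\<Sum>j\<in>Xa. coefK d S K Ma fa \<epsilon> j * fa j) + (\<Sum>j\<in>Xr. coefK d S K Mr gr \<epsilon> j * gr j)))"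
    using sgn_sq[OF d0] by (simp add: mult.assoc[symmetric])
  also have "\<dots> = d + \<epsilon> * sgn d * (K - ((\<Sum>j\<in>Ma. \<bar>fa j\<bar>) + (\<Sum>j\<in>Mr. \<bar>gr j\<bar>)))"
    unfolding tot using d0 by (cases "d > 0") (auto simp: sgn_if algebra_simps)
  finally show ?thesis .
qed

lemma coefK_pos:
  assumes "\<epsilon> > 0" "K \<ge> 0" "S > 0" "h j \<noteq> 0"
  shows "coefK d S K M h \<epsilon> j > 0 \<or> d = 0"
  using assms by (auto simp: coefK_def intro!: divide_pos_pos mult_pos_pos add_pos_nonneg)

lemma node_energy0:
  fixes d S K :: real and fa gr :: "nat \<Rightarrow> real" and Xa Xr :: "nat set"
  defines "Pa \<equiv> {j\<in>Xa. sgn d = sgn (fa j)}" and "Pr \<equiv> {j\<in>Xr. sgn d = sgn (gr j)}"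
  defines "Ma \<equiv> {j\<in>Xa. sgn d = - sgn (fa j)}" and "Mr \<equiv> {j\<in>Xr. sgn d = - sgn (gr j)}"
  assumes fin: "finite Xa" "finite Xr" and nz: "\<forall>j\<in>Xa. fa j \<noteq> 0" "\<forall>j\<in>Xr. gr j \<noteq> 0"
    and d0: "d \<noteq> 0"
    and Sdef: "S = (\<Sum>j\<in>Pa. (fa j)\<^sup>2) + (\<Sum>j\<in>Pr. (gr j)\<^sup>2)" and Spos: "S > 0"
  shows "(\<Sum>j\<in>Xa. (coefK d S K Ma fa 0 j)\<^sup>2) + (\<Sum>j\<in>Xr. (coefK d S K Mr gr 0 j)\<^sup>2) = d\<^sup>2 / S"
proof -
  have dPM: "Pa \<inter> Ma = {}" "Pr \<inter> Mr = {}" using d0 unfolding Pa_def Ma_def Pr_def Mr_def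
    by (auto simp: sgn_if split: if_splits)
  have a: "(\<Sum>j\<in>Xa. (coefK d S K Ma fa 0 j)\<^sup>2) = (\<Sum>j\<in>Pa. (coefK d S K Ma fa 0 j)\<^sup>2) + (\<Sum>j\<in>Ma. (coefK d S K Ma fa 0 j)\<^sup>2)"
    unfolding Pa_def Ma_def by (rule split_sum[OF fin(1) nz(1) d0])
  have r: "(\<Sum>j\<in>Xr. (coefK d S K Mr gr 0 j)\<^sup>2) = (\<Sum>j\<in>Pr. (coefK d S K Mr gr 0 j)\<^sup>2) + (\<Sum>j\<in>Mr. (coefK d S K Mr gr 0 j)\<^sup>2)"
    unfolding Pr_def Mr_def by (rule split_sum[OF fin(2) nz(2) d0])
  have pa: "(\<Sum>j\<in>Pa. (coefK d S K Ma fa 0 j)\<^sup>2) = d\<^sup>2 / S\<^sup>2 * (\<Sum>j\<in>Pa. (fa j)\<^sup>2)"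
    unfolding sum_distrib_left
    by (rule sum.cong[OF refl]) (use dPM in \<open>auto simp: coefK_def power_divide power_mult_distrib\<close>)
  have pr: "(\<Sum>j\<in>Pr. (coefK d S K Mr gr 0 j)\<^sup>2) = d\<^sup>2 / S\<^sup>2 * (\<Sum>j\<in>Pr. (gr j)\<^sup>2)"
    unfolding sum_distrib_left
    by (rule sum.cong[OF refl]) (use dPM in \<open>auto simp: coefK_def power_divide power_mult_distrib\<close>)
  have ma: "(\<Sum>j\<in>Ma. (coefK d S K Ma fa 0 j)\<^sup>2) = 0" by (auto simp: coefK_def)
  have mr: "(\<Sum>j\<in>Mr. (coefK d S K Mr gr 0 j)\<^sup>2) = 0" by (auto simp: coefK_def)
  have "d\<^sup>2 / S\<^sup>2 * (\<Sum>j\<in>Pa. (fa j)\<^sup>2) + d\<^sup>2 / S\<^sup>2 * (\<Sum>j\<in>Pr. (gr j)\<^sup>2) = d\<^sup>2 / S\<^sup>2 * S"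
    by (metis Sdef distrib_left)
  then show ?thesis unfolding a r pa pr ma mr using Spos
    by (simp add: power2_eq_square)
qed

lemma coefK_tendsto: "((\<lambda>\<epsilon>. coefK d S K M h \<epsilon> j) \<longlongrightarrow> coefK d S K M h 0 j) (at_right 0)"
proof (cases "j \<in> M")
  case True
  then show ?thesis by (simp add: coefK_def tendsto_ident_at)
next
  case False
  have "((\<lambda>\<epsilon>::real. (\<bar>d\<bar> + \<epsilon> * K) * (\<bar>h j\<bar> / S)) \<longlongrightarrow> (\<bar>d\<bar> + 0 * K) * (\<bar>h j\<bar> / S)) (at_right 0)"
    by (intro tendsto_intros tendsto_ident_at)
  then show ?thesis using False by (simp add: coefK_def)
qed


theorem theorem4:
  fixes N :: nat
    and E Ea Er :: "nat \<Rightarrow> nat \<Rightarrow> bool"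
    and \<omega> :: "nat \<Rightarrow> real" and \<omega>b :: real
    and \<Delta> :: "nat \<Rightarrow> nat \<Rightarrow> real"
    and fs gs :: "real \<Rightarrow> real"
  assumes graph: "undirected_graph N E"
    and conn: "graph_connected N E"
    and form: "formation E \<Delta>"
    and nondeg: "\<And>i j (k::int). E i j \<Longrightarrow> \<Delta> i j \<noteq> of_int k * pi"
    and part: "\<And>i j. E i j \<longleftrightarrow> Ea i j \<or> Er i j"
    and disj: "\<And>i j. \<not> (Ea i j \<and> Er i j)"
    and Ea_sym: "\<And>i j. Ea i j \<Longrightarrow> Ea j i"
    and Er_sym: "\<And>i j. Er i j \<Longrightarrow> Er j i"
    and f_att: "attractive_coupling fs"
    and g_rep: "repulsive_coupling gs"
    and nonempty: "\<And>i. i \<in> {1..N} \<Longrightarrow>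
        plus_nbr N Ea fs \<Delta> \<omega> \<omega>b i \<union> plus_nbr N Er gs \<Delta> \<omega> \<omega>b i \<noteq> {}"
  shows "(\<exists>\<alpha> \<beta>. positive_solution N Ea Er fs gs \<Delta> \<omega> \<omega>b \<alpha> \<beta>)
       \<and> (\<forall>\<alpha> \<beta>. positive_solution N Ea Er fs gs \<Delta> \<omega> \<omega>b \<alpha> \<beta> \<longrightarrow>
                  energy N Ea Er \<alpha> \<beta> \<ge> E0 N Ea Er fs gs \<Delta> \<omega> \<omega>b)
       \<and> Inf {energy N Ea Er \<alpha> \<beta> | \<alpha> \<beta>. positive_solution N Ea Er fs gs \<Delta> \<omega> \<omega>b \<alpha> \<beta>}
           = E0 N Ea Er fs gs \<Delta> \<omega> \<omega>b
       \<and> (\<forall>i\<in>{1..N}. ((\<lambda>\<epsilon>. coupling_sum N Ea Er fs gs \<Delta>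
                               (eps_coeff N Ea Er fs gs \<Delta> \<omega> \<omega>b Ea fs \<epsilon>)
                               (eps_coeff N Ea Er fs gs \<Delta> \<omega> \<omega>b Er gs \<epsilon>) i - (\<omega>b - \<omega> i))
                         \<longlongrightarrow> 0) (at_right 0))
       \<and> ((\<lambda>\<epsilon>. energy N Ea Er (eps_coeff N Ea Er fs gs \<Delta> \<omega> \<omega>b Ea fs \<epsilon>)
                             (eps_coeff N Ea Er fs gs \<Delta> \<omega> \<omega>b Er gs \<epsilon>))
            \<longlongrightarrow> E0 N Ea Er fs gs \<Delta> \<omega> \<omega>b) (at_right 0)"
proof -
  define S where "S i = S_sum N Ea Er fs gs \<Delta> \<omega> \<omega>b i" for i
  define Ma where "Ma i = minus_nbr N Ea fs \<Delta> \<omega> \<omega>b i" for i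
  define Mr where "Mr i = minus_nbr N Er gs \<Delta> \<omega> \<omega>b i" for i
  define Km where "Km i = (\<Sum>j\<in>Ma i. \<bar>fs (\<Delta> i j)\<bar>) + (\<Sum>j\<in>Mr i. \<bar>gs (\<Delta> i j)\<bar>)" for i
  define al where "al K \<epsilon> i = coefK (\<omega>b - \<omega> i) (S i) (K i) (Ma i) (\<lambda>j. fs (\<Delta> i j)) \<epsilon>" for K :: "nat \<Rightarrow> real" and \<epsilon> i
  define be where "be K \<epsilon> i = coefK (\<omega>b - \<omega> i) (S i) (K i) (Mr i) (\<lambda>j. gs (\<Delta> i j)) \<epsilon>" for K :: "nat \<Rightarrow> real" and \<epsilon> i
  have finX: "finite (nbr N R i)" for R i unfolding nbr_def by auto
  have nza: "\<forall>j\<in>nbr N Ea i. fs (\<Delta> i j) \<noteq> 0" for i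
  proof
    fix j assume "j \<in> nbr N Ea i"
    then have "E i j" using part unfolding nbr_def by auto
    then show "fs (\<Delta> i j) \<noteq> 0" using att_nonzero[OF f_att] nondeg by blast
  qed
  have nzr: "\<forall>j\<in>nbr N Er i. gs (\<Delta> i j) \<noteq> 0" for i
  proof
    fix j assume "j \<in> nbr N Er i"
    then have "E i j" using part unfolding nbr_def by auto
    then show "gs (\<Delta> i j) \<noteq> 0" using rep_nonzero[OF g_rep] nondeg by blast
  qed
  have d0: "\<omega>b - \<omega> i \<noteq> 0" if i: "i \<in> {1..N}" for i
  proof
    assume z: "\<omega>b - \<omega> i = 0"
    from nonempty[OF i] obtain j where
      "j \<in> plus_nbr N Ea fs \<Delta> \<omega> \<omega>b i \<or> j \<in> plus_nbr N Er gs \<Delta> \<omega> \<omega>b i" by blast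
    then show False using nza[of i] nzr[of i] z unfolding plus_nbr_def by (auto simp: sgn_0_0)
  qed
  have Sdef: "S i = (\<Sum>j\<in>{j\<in>nbr N Ea i. sgn (\<omega>b - \<omega> i) = sgn (fs (\<Delta> i j))}. (fs (\<Delta> i j))\<^sup>2)
       + (\<Sum>j\<in>{j\<in>nbr N Er i. sgn (\<omega>b - \<omega> i) = sgn (gs (\<Delta> i j))}. (gs (\<Delta> i j))\<^sup>2)" for i
    unfolding S_def S_sum_def plus_nbr_def by simp
  have Spos: "S i > 0" if i: "i \<in> {1..N}" for i
  proof -
    from nonempty[OF i] obtain j where
      "j \<in> plus_nbr N Ea fs \<Delta> \<omega> \<omega>b i \<or> j \<in> plus_nbr N Er gs \<Delta> \<omega> \<omega>b i" by blast
    then show ?thesis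
    proof
      assume j: "j \<in> plus_nbr N Ea fs \<Delta> \<omega> \<omega>b i"
      have "0 < (fs (\<Delta> i j))\<^sup>2" using j nza[of i] unfolding plus_nbr_def by auto
      also have "\<dots> \<le> (\<Sum>j\<in>plus_nbr N Ea fs \<Delta> \<omega> \<omega>b i. (fs (\<Delta> i j))\<^sup>2)"
        by (rule member_le_sum[OF j]) (auto simp: plus_nbr_def finX)
      also have "\<dots> \<le> S i" unfolding S_def S_sum_def by (simp add: sum_nonneg)
      finally show ?thesis .
    next
      assume j: "j \<in> plus_nbr N Er gs \<Delta> \<omega> \<omega>b i"
      have "0 < (gs (\<Delta> i j))\<^sup>2" using j nzr[of i] unfolding plus_nbr_def by auto
      also have "\<dots> \<le> (\<Sum>j\<in>plus_nbr N Er gs \<Delta> \<omega> \<omega>b i. (gs (\<Delta> i j))\<^sup>2)"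
        by (rule member_le_sum[OF j]) (auto simp: plus_nbr_def finX)
      also have "\<dots> \<le> S i" unfolding S_def S_sum_def by (simp add: sum_nonneg)
      finally show ?thesis .
    qed
  qed
  have csum: "coupling_sum N Ea Er fs gs \<Delta> (al K \<epsilon>) (be K \<epsilon>) i
      = (\<omega>b - \<omega> i) + \<epsilon> * sgn (\<omega>b - \<omega> i) * (K i - Km i)" if i: "i \<in> {1..N}" for K \<epsilon> i
    unfolding coupling_sum_def al_def be_def Km_def Ma_def Mr_def minus_nbr_def
    by (rule node_sol[OF finX finX nza nzr d0[OF i] Sdef Spos[OF i]])
  have en0: "(\<Sum>j\<in>nbr N Ea i. (al K 0 i j)\<^sup>2) + (\<Sum>j\<in>nbr N Er i. (be K 0 i j)\<^sup>2)
      = (\<omega>b - \<omega> i)\<^sup>2 / S i" if i: "i \<in> {1..N}" for K i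
    unfolding al_def be_def Ma_def Mr_def minus_nbr_def
    by (rule node_energy0[OF finX finX nza nzr d0[OF i] Sdef Spos[OF i]])
  have entend: "((\<lambda>\<epsilon>. energy N Ea Er (al K \<epsilon>) (be K \<epsilon>)) \<longlongrightarrow> E0 N Ea Er fs gs \<Delta> \<omega> \<omega>b) (at_right 0)" for K
  proof -
    have "((\<lambda>\<epsilon>. energy N Ea Er (al K \<epsilon>) (be K \<epsilon>)) \<longlongrightarrow>
        (\<Sum>i\<in>{1..N}. (\<Sum>j\<in>nbr N Ea i. (al K 0 i j)\<^sup>2) + (\<Sum>j\<in>nbr N Er i. (be K 0 i j)\<^sup>2))) (at_right 0)"
      unfolding energy_def al_def be_def
      by (intro tendsto_sum tendsto_add tendsto_power coefK_tendsto)
    also have "(\<Sum>i\<in>{1..N}. (\<Sum>j\<in>nbr N Ea i. (al K 0 i j)\<^sup>2) + (\<Sum>j\<in>nbr N Er i. (be K 0 i j)\<^sup>2))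
        = E0 N Ea Er fs gs \<Delta> \<omega> \<omega>b"
      unfolding E0_def S_def[symmetric] by (rule sum.cong[OF refl]) (use en0 in auto)
    finally show ?thesis .
  qed
  have Km0: "Km i \<ge> 0" for i unfolding Km_def by (intro add_nonneg_nonneg sum_nonneg) auto
  have possol: "positive_solution N Ea Er fs gs \<Delta> \<omega> \<omega>b (al Km \<epsilon>) (be Km \<epsilon>)" if "\<epsilon> > 0" for \<epsilon>
    unfolding positive_solution_def
  proof (intro conjI ballI)
    fix i j assume i: "i \<in> {1..N}" and j: "j \<in> nbr N Ea i"
    show "al Km \<epsilon> i j > 0" unfolding al_def
      using coefK_pos[where \<epsilon>=\<epsilon> and K="Km i" and S="S i" and h="\<lambda>j. fs (\<Delta> i j)" and j=j and d="\<omega>b - \<omega> i" and M="Ma i"] that Km0[of i] Spos[OF i] nza[of i] j d0[OF i] by auto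
  next
    fix i j assume i: "i \<in> {1..N}" and j: "j \<in> nbr N Er i"
    show "be Km \<epsilon> i j > 0" unfolding be_def
      using coefK_pos[where \<epsilon>=\<epsilon> and K="Km i" and S="S i" and h="\<lambda>j. gs (\<Delta> i j)" and j=j and d="\<omega>b - \<omega> i" and M="Mr i"] that Km0[of i] Spos[OF i] nzr[of i] j d0[OF i] by auto
  next
    fix i assume i: "i \<in> {1..N}"
    show "\<omega>b - \<omega> i = coupling_sum N Ea Er fs gs \<Delta> (al Km \<epsilon>) (be Km \<epsilon>) i"
      using csum[OF i] by simp
  qed
  have lb: "energy N Ea Er \<alpha> \<beta> \<ge> E0 N Ea Er fs gs \<Delta> \<omega> \<omega>b"
    if ps: "positive_solution N Ea Er fs gs \<Delta> \<omega> \<omega>b \<alpha> \<beta>" for \<alpha> \<beta>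
    unfolding energy_def E0_def
  proof (rule sum_mono)
    fix i assume i: "i \<in> {1..N}"
    show "(\<omega>b - \<omega> i)\<^sup>2 / S_sum N Ea Er fs gs \<Delta> \<omega> \<omega>b i
        \<le> (\<Sum>j\<in>nbr N Ea i. (\<alpha> i j)\<^sup>2) + (\<Sum>j\<in>nbr N Er i. (\<beta> i j)\<^sup>2)"
      unfolding S_def[symmetric]
    proof (rule node_lb[OF finX finX nza nzr d0[OF i]])
      show "\<forall>j\<in>nbr N Ea i. 0 \<le> \<alpha> i j" "\<forall>j\<in>nbr N Er i. 0 \<le> \<beta> i j"
        using ps i unfolding positive_solution_def by (auto simp: less_imp_le)
      show "\<omega>b - \<omega> i = (\<Sum>j\<in>nbr N Ea i. \<alpha> i j * fs (\<Delta> i j)) + (\<Sum>j\<in>nbr N Er i. \<beta> i j * gs (\<Delta> i j))"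
        using ps i unfolding positive_solution_def coupling_sum_def by auto
    qed (use Sdef Spos[OF i] in auto)
  qed
  have ex: "\<exists>\<alpha> \<beta>. positive_solution N Ea Er fs gs \<Delta> \<omega> \<omega>b \<alpha> \<beta>"
    using possol[of 1] by auto
  have inf: "Inf {energy N Ea Er \<alpha> \<beta> | \<alpha> \<beta>. positive_solution N Ea Er fs gs \<Delta> \<omega> \<omega>b \<alpha> \<beta>}
           = E0 N Ea Er fs gs \<Delta> \<omega> \<omega>b"
  proof (rule cInf_eq_non_empty)
    show "{energy N Ea Er \<alpha> \<beta> | \<alpha> \<beta>. positive_solution N Ea Er fs gs \<Delta> \<omega> \<omega>b \<alpha> \<beta>} \<noteq> {}"
      using ex by blast
  next
    fix x assume "x \<in> {energy N Ea Er \<alpha> \<beta> | \<alpha> \<beta>. positive_solution N Ea Er fs gs \<Delta> \<omega> \<omega>b \<alpha> \<beta>}"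
    then show "E0 N Ea Er fs gs \<Delta> \<omega> \<omega>b \<le> x" using lb by blast
  next
    fix y assume H: "\<And>x. x \<in> {energy N Ea Er \<alpha> \<beta> | \<alpha> \<beta>. positive_solution N Ea Er fs gs \<Delta> \<omega> \<omega>b \<alpha> \<beta>} \<Longrightarrow> y \<le> x"
    show "y \<le> E0 N Ea Er fs gs \<Delta> \<omega> \<omega>b"
    proof (rule tendsto_lowerbound[OF entend[of Km]])
      show "\<forall>\<^sub>F \<epsilon> in at_right 0. y \<le> energy N Ea Er (al Km \<epsilon>) (be Km \<epsilon>)"
        using eventually_at_right_less[of "0::real"]
        by (rule eventually_mono) (use H possol in blast)
    qed simp
  qed
  have epsK: "eps_coeff N Ea Er fs gs \<Delta> \<omega> \<omega>b Ea fs \<epsilon> = al (\<lambda>_. 0) \<epsilon>"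
     "eps_coeff N Ea Er fs gs \<Delta> \<omega> \<omega>b Er gs \<epsilon> = be (\<lambda>_. 0) \<epsilon>" for \<epsilon>
    by (auto simp: fun_eq_iff eps_coeff_def al_def be_def coefK_def Ma_def Mr_def S_def)
  have lim4: "((\<lambda>\<epsilon>. coupling_sum N Ea Er fs gs \<Delta>
                               (eps_coeff N Ea Er fs gs \<Delta> \<omega> \<omega>b Ea fs \<epsilon>)
                               (eps_coeff N Ea Er fs gs \<Delta> \<omega> \<omega>b Er gs \<epsilon>) i - (\<omega>b - \<omega> i))
                         \<longlongrightarrow> 0) (at_right 0)" if i: "i \<in> {1..N}" for i
  proof -
    have "((\<lambda>\<epsilon>::real. \<epsilon> * (sgn (\<omega>b - \<omega> i) * (0 - Km i))) \<longlongrightarrow> 0 * (sgn (\<omega>b - \<omega> i) * (0 - Km i))) (at_right 0)"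
      by (intro tendsto_intros tendsto_ident_at)
    then show ?thesis unfolding epsK csum[OF i] by (simp add: algebra_simps)
  qed
  show ?thesis
    using ex lb inf lim4 entend[of "\<lambda>_. 0"] unfolding epsK by blast
qed

end
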